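(* Assume (H1), (H2) and the sequence setting (Seq). Let $x\in\mathrm{dom}\,J$, and for each $k$ let $(\bar u_{1,k},\dots,\bar u_{N,k})$ be any minimizer of the Lax problem at the point $(x_k,t_{1,k},\dots,t_{N,k})$. Then: (i) $\lim_{k\to\infty}\bar u_{j,k}=0$ for every $j=1,\dots,N$; (ii) if $\partial J(x)\ne\emptyset$ and $\alpha_{j,\infty}=0$, then $\lim_{k\to\infty}\bar u_{j,k}/t_{1,k}=0$; (iii) if $\partial J(x)\ne\emptyset$ and $\alpha_{j,\infty}\ne0$, then the sequence $(\bar u_{j,k}/t_{j,k})_k$ is bounded.
   Context: Hypothesis (H1): each $H_j:\mathbb{R}^n\to\mathbb{R}$ ($j=1,\dots,N$) is finite-valued, convex and 1-coercive (i.e. $H_j(p)/\|p\|\to+\infty$ as $\|p\|\to\infty$), and at least one $H_j$ is strictly convex. Hypothesis (H2): $J:\mathbb{R}^n\to\mathbb{R}\cup\{+\infty\}$ is proper, convex and lower semicontinuous. $H_j^*$ is the Legendre transform of $H_j$. The Lax problem at $(y,t_1,\dots,t_N)$ with all $t_j>0$ is: minimize $J(y-\sum_{j=1}^N u_j)+\sum_{j=1}^N t_jH_j^*(u_j/t_j)$ over $u_1,\dots,u_N\in\mathbb{R}^n$ (minimizers exist under (H1)-(H2)). Sequence setting (Seq): $x\in\mathbb{R}^n$; for each $j\in\{1,\dots,N\}$ and $k\in\mathbb{N}$, $t_{j,k}>0$ and $v_{j,k}\in\mathbb{R}^n$, with $t_{j,k}\to0$, $v_{j,k}\to v_{j,\infty}\in\mathbb{R}^n$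 and $t_{j,k}/t_{1,k}\to\alpha_{j,\infty}\in\mathbb{R}$ as $k\to\infty$; and $x_k=x+\sum_{j=1}^N t_{j,k}v_{j,k}$. *)

theory Defs
  imports "HOL-Analysis.Analysis" "HOL-Library.Extended_Real"
begin

definition strictly_convex :: "('a::real_vector \<Rightarrow> real) \<Rightarrow> bool" where
  "strictly_convex f \<longleftrightarrow>
     (\<forall>x y. \<forall>\<mu>::real. x \<noteq> y \<and> 0 < \<mu> \<and> \<mu> < 1 \<longrightarrow>
        f ((1 - \<mu>) *\<^sub>R x + \<mu> *\<^sub>R y) < (1 - \<mu>) * f x + \<mu> * f y)"

definition one_coercive :: "('a::real_normed_vector \<Rightarrow> real) \<Rightarrow> bool" where
  "one_coercive H \<longleftrightarrow> filterlim (\<lambda>p. H p / norm p) at_top at_infinity"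

definition H1 :: "nat \<Rightarrow> (nat \<Rightarrow> 'a::real_normed_vector \<Rightarrow> real) \<Rightarrow> bool" where
  "H1 N H \<longleftrightarrow> (\<forall>j\<in>{1..N}. convex_on UNIV (H j) \<and> one_coercive (H j))
              \<and> (\<exists>j\<in>{1..N}. strictly_convex (H j))"

definition ereal_convex :: "('a::real_vector \<Rightarrow> ereal) \<Rightarrow> bool" where
  "ereal_convex J \<longleftrightarrow>
     (\<forall>x y. \<forall>\<mu>::real. 0 < \<mu> \<and> \<mu> < 1 \<longrightarrow>
        J ((1 - \<mu>) *\<^sub>R x + \<mu> *\<^sub>R y) \<le> ereal (1 - \<mu>) * J x + ereal \<mu> * J y)"

definition proper_fun :: "('a \<Rightarrow> ereal) \<Rightarrow> bool" where
  "proper_fun J \<longleftrightarrow> (\<forall>x. J x \<noteq> -\<infinity>) \<and> (\<exists>x. J x \<noteq> \<infinity>)"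

definition lsc :: "('a::topological_space \<Rightarrow> ereal) \<Rightarrow> bool" where
  "lsc J \<longleftrightarrow> (\<forall>x. J x \<le> Liminf (at x) J)"

definition H2 :: "('a::real_normed_vector \<Rightarrow> ereal) \<Rightarrow> bool" where
  "H2 J \<longleftrightarrow> proper_fun J \<and> ereal_convex J \<and> lsc J"

definition edom :: "('a \<Rightarrow> ereal) \<Rightarrow> 'a set" where
  "edom J = {x. J x < \<infinity>}"

definition subdiff :: "('a::real_inner \<Rightarrow> ereal) \<Rightarrow> 'a \<Rightarrow> 'a set" where
  "subdiff J x = {s. \<forall>y. J y \<ge> J x + ereal (s \<bullet> (y - x))}"

text \<open>Legendre transform (finite-valued under (H1)).\<close>
definition legendre :: "('a::real_inner \<Rightarrow> real) \<Rightarrow> 'a \<Rightarrow> real" where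
  "legendre H p = (SUP q. p \<bullet> q - H q)"

definition lax_obj :: "nat \<Rightarrow> (nat \<Rightarrow> 'a::real_inner \<Rightarrow> real) \<Rightarrow> ('a \<Rightarrow> ereal)
                      \<Rightarrow> 'a \<Rightarrow> (nat \<Rightarrow> real) \<Rightarrow> (nat \<Rightarrow> 'a) \<Rightarrow> ereal" where
  "lax_obj N H J y t u =
     J (y - (\<Sum>j=1..N. u j)) + ereal (\<Sum>j=1..N. t j * legendre (H j) ((1 / t j) *\<^sub>R u j))"

definition lax_minimizer :: "nat \<Rightarrow> (nat \<Rightarrow> 'a::real_inner \<Rightarrow> real) \<Rightarrow> ('a \<Rightarrow> ereal)
                      \<Rightarrow> 'a \<Rightarrow> (nat \<Rightarrow> real) \<Rightarrow> (nat \<Rightarrow> 'a) \<Rightarrow> bool" where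
  "lax_minimizer N H J y t u \<longleftrightarrow>
     (\<forall>w. lax_obj N H J y t u \<le> lax_obj N H J y t w)"

end

theory Submission
  imports Defs
begin

lemma H_cont:
  fixes H :: "'a::euclidean_space \<Rightarrow> real"
  assumes "convex_on UNIV H" shows "continuous_on UNIV H"
  using convex_on_continuous[OF open_UNIV assms] .

lemma H_bdd_cball:
  fixes H :: "'a::euclidean_space \<Rightarrow> real"
  assumes "convex_on UNIV H" shows "\<exists>M. \<forall>q. norm q \<le> r \<longrightarrow> \<bar>H q\<bar> \<le> M"
proof -
  have "compact (H ` cball 0 r)"
    by (rule compact_continuous_image) (use H_cont[OF assms] continuous_on_subset in auto)
  then have "bounded (H ` cball 0 r)" by (rule compact_imp_bounded)
  then obtain M where "\<forall>y\<in>H ` cball 0 r. norm y \<le> M" by (auto simp: bounded_iff)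
  then have "\<forall>q. norm q \<le> r \<longrightarrow> \<bar>H q\<bar> \<le> M" by auto
  then show ?thesis by blast
qed

lemma coerc:
  fixes H :: "'a::real_normed_vector \<Rightarrow> real"
  assumes "one_coercive H" shows "\<exists>b>0. \<forall>q. norm q \<ge> b \<longrightarrow> H q \<ge> K * norm q"
proof -
  have "eventually (\<lambda>p. K \<le> H p / norm p) at_infinity"
    using assms unfolding one_coercive_def filterlim_at_top by blast
  then obtain b where b: "\<forall>x. b \<le> norm x \<longrightarrow> K \<le> H x / norm x"
    by (auto simp: eventually_at_infinity)
  show ?thesis
  proof (intro exI[of _ "max b 1"] conjI allI impI)
    fix q :: 'a assume q: "max b 1 \<le> norm q"
    then have "K \<le> H q / norm q" "norm q > 0" using b by auto
    then show "K * norm q \<le> H q" by (simp add: pos_le_divide_eq)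
  qed auto
qed

lemma leg_upper:
  fixes H :: "'a::euclidean_space \<Rightarrow> real"
  assumes "convex_on UNIV H" "one_coercive H"
  shows "\<exists>C. \<forall>p q. norm p \<le> B \<longrightarrow> p \<bullet> q - H q \<le> C"
proof -
  obtain b where b: "b > 0" "\<forall>q. norm q \<ge> b \<longrightarrow> H q \<ge> (max B 0 + 1) * norm q"
    using coerc[OF assms(2)] by blast
  obtain M where M: "\<forall>q. norm q \<le> b \<longrightarrow> \<bar>H q\<bar> \<le> M"
    using H_bdd_cball[OF assms(1)] by blast
  show ?thesis
  proof (intro exI[of _ "max B 0 * b + M"] allI impI)
    fix p q :: 'a assume p: "norm p \<le> B"
    have pq: "p \<bullet> q \<le> max B 0 * norm q"
      using norm_cauchy_schwarz[of p q] p
      by (meson max.cobounded1 mult_right_mono norm_ge_zero order_trans)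
    have M0: "M \<ge> 0" using M[rule_format, of 0] b by auto
    show "p \<bullet> q - H q \<le> max B 0 * b + M"
    proof (cases "norm q \<ge> b")
      case True
      then have "H q \<ge> (max B 0 + 1) * norm q" using b by auto
      then show ?thesis using pq M0 b
        by (smt (verit, best) distrib_right mult_nonneg_nonneg max.cobounded2 norm_ge_zero)
    next
      case False
      then have "\<bar>H q\<bar> \<le> M" using M by auto
      moreover have "max B 0 * norm q \<le> max B 0 * b" using False
        by (simp add: mult_left_mono)
      ultimately show ?thesis using pq by linarith
    qed
  qed
qed

lemma leg_bdd:
  fixes H :: "'a::euclidean_space \<Rightarrow> real"
  assumes "convex_on UNIV H" "one_coercive H"
  shows "bdd_above (range (\<lambda>q. p \<bullet> q - H q))"
proof -
  obtain C where "\<forall>p' q. norm p' \<le> norm p \<longrightarrow> p' \<bullet> q - H q \<le> C"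
    using leg_upper[OF assms] by blast
  then show ?thesis by (auto intro!: bdd_aboveI[of _ C])
qed

lemma leg_ge:
  fixes H :: "'a::euclidean_space \<Rightarrow> real"
  assumes "convex_on UNIV H" "one_coercive H"
  shows "legendre H p \<ge> p \<bullet> q - H q"
  unfolding legendre_def by (rule cSUP_upper[OF _ leg_bdd[OF assms]]) auto

lemma leg_le_bound:
  fixes H :: "'a::euclidean_space \<Rightarrow> real"
  assumes "convex_on UNIV H" "one_coercive H"
  shows "\<exists>C. \<forall>p. norm p \<le> B \<longrightarrow> \<bar>legendre H p\<bar> \<le> C"
proof -
  obtain C where C: "\<forall>p q. norm p \<le> B \<longrightarrow> p \<bullet> q - H q \<le> C"
    using leg_upper[OF assms] by blast
  show ?thesis
  proof (intro exI[of _ "max C \<bar>H 0\<bar>"] allI impI)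
    fix p :: 'a assume p: "norm p \<le> B"
    have "legendre H p \<le> C" unfolding legendre_def
      by (rule cSUP_least) (use C p in auto)
    moreover have "legendre H p \<ge> p \<bullet> 0 - H 0" by (rule leg_ge[OF assms])
    ultimately show "\<bar>legendre H p\<bar> \<le> max C \<bar>H 0\<bar>" by auto
  qed
qed

lemma leg_coercive:
  fixes H :: "'a::euclidean_space \<Rightarrow> real"
  assumes "convex_on UNIV H" "one_coercive H" "R \<ge> 0"
  shows "\<exists>M. \<forall>p. legendre H p \<ge> R * norm p - M"
proof -
  obtain M where M: "\<forall>q. norm q \<le> R \<longrightarrow> \<bar>H q\<bar> \<le> M"
    using H_bdd_cball[OF assms(1)] by blast
  show ?thesis
  proof (intro exI[of _ M] allI)
    fix p :: 'a
    show "legendre H p \<ge> R * norm p - M"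
    proof (cases "p = 0")
      case True
      have "legendre H p \<ge> p \<bullet> 0 - H 0" by (rule leg_ge[OF assms(1,2)])
      then show ?thesis using True M[rule_format, of 0] assms(3) by auto
    next
      case False
      define q where "q = (R / norm p) *\<^sub>R p"
      have nq: "norm q = R" using False assms(3) by (simp add: q_def)
      have pq: "p \<bullet> q = R * norm p" using False
        by (simp add: q_def inner_commute power2_norm_eq_inner[symmetric] power2_eq_square)
      have "legendre H p \<ge> p \<bullet> q - H q" by (rule leg_ge[OF assms(1,2)])
      then show ?thesis using pq M nq by force
    qed
  qed
qed


lemma J_lower:
  fixes J :: "'a::real_normed_vector \<Rightarrow> ereal"
  assumes hJ: "H2 J" and xd: "J x < \<infinity>"
  shows "\<exists>c L. L \<ge> 0 \<and> (\<forall>y. J y \<ge> ereal (c - L * norm (y - x)))"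
proof -
  have pr: "\<forall>y. J y \<noteq> -\<infinity>" and cv: "ereal_convex J" and ls: "lsc J"
    using hJ by (auto simp: H2_def proper_fun_def)
  obtain a where a: "J x = ereal a" using xd pr by (cases "J x") auto
  have "ereal (a - 1) < Liminf (at x) J"
  proof -
    have "ereal (a - 1) < J x" using a by simp
    also have "J x \<le> Liminf (at x) J" using ls unfolding lsc_def by blast
    finally show ?thesis .
  qed
  then have "eventually (\<lambda>y. J y > ereal (a - 1)) (at x)" by (rule less_LiminfD)
  then obtain d where d: "d > 0" "\<forall>y. y \<noteq> x \<and> dist y x < d \<longrightarrow> J y > ereal (a - 1)"
    by (auto simp: eventually_at)
  have "\<forall>y. ereal (a - 1 - 2 / d * norm (y - x)) \<le> J y"
  proof
    fix y
    show "ereal (a - 1 - 2 / d * norm (y - x)) \<le> J y"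
    proof (cases "y = x")
      case True then show ?thesis using a by simp
    next
      case yx: False
      show ?thesis
      proof (cases "dist y x < d")
        case True
        then have "J y > ereal (a - 1)" using d yx by auto
        moreover have "ereal (a - 1 - 2 / d * norm (y - x)) \<le> ereal (a - 1)" using d by simp
        ultimately show ?thesis by (meson less_imp_le order_trans)
      next
        case far: False
        show ?thesis
        proof (cases "J y")
          case PInf then show ?thesis by simp
        next
          case MInf then show ?thesis using pr by simp
        next
          case (real b)
          define n where "n = norm (y - x)"
          have nd: "n \<ge> d" using far by (simp add: n_def dist_norm)
          define \<mu> where "\<mu> = d / (2 * n)"
          have n0: "n > 0" using nd d by simp
          have mu0: "0 < \<mu>" "\<mu> < 1" using d nd n0 by (auto simp: \<mu>_def field_simps)
          define z where "z = (1 - \<mu>) *\<^sub>R x + \<mu> *\<^sub>R y"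
          have zx: "z - x = \<mu> *\<^sub>R (y - x)" by (simp add: z_def algebra_simps)
          have dz: "dist z x = d / 2" using n0 mu0 d
            by (simp add: dist_norm zx n_def[symmetric] \<mu>_def)
          have "z \<noteq> x" using dz d by auto
          then have "J z > ereal (a - 1)" using d dz by auto
          moreover have "J z \<le> ereal (1 - \<mu>) * J x + ereal \<mu> * J y"
            using cv mu0 unfolding ereal_convex_def z_def by blast
          ultimately have "ereal (a - 1) < ereal ((1 - \<mu>) * a + \<mu> * b)" using a real
            by (metis less_le_trans times_ereal.simps(1) plus_ereal.simps(1))
          then have "a - 1 < (1 - \<mu>) * a + \<mu> * b" by simp
          then have "\<mu> * b > \<mu> * a - 1" by (simp add: algebra_simps)
          then have "b > a - 1 / \<mu>" using mu0 by (simp add: field_simps)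
          moreover have "1 / \<mu> = 2 / d * n" using d n0 by (simp add: \<mu>_def)
          ultimately show ?thesis using real d by (simp add: n_def)
        qed
      qed
    qed
  qed
  moreover have "0 \<le> 2 / d" using d by simp
  ultimately show ?thesis by blast
qed


lemma M_choice:
  fixes H :: "nat \<Rightarrow> 'a::euclidean_space \<Rightarrow> real"
  assumes "\<And>j. j \<in> I \<Longrightarrow> convex_on UNIV (H j) \<and> one_coercive (H j)" "R \<ge> 0"
  shows "\<exists>M. \<forall>j\<in>I. \<forall>p. legendre (H j) p \<ge> R * norm p - M j"
proof -
  have "\<forall>j\<in>I. \<exists>M. \<forall>p. legendre (H j) p \<ge> R * norm p - M"
    using leg_coercive assms by blast
  then show ?thesis by (rule bchoice)
qed

lemma tL0:
  fixes H :: "'a::euclidean_space \<Rightarrow> real"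
  assumes "convex_on UNIV H" "one_coercive H" "f \<longlonglongrightarrow> 0" "g \<longlonglongrightarrow> l"
  shows "(\<lambda>k. f k * legendre H (g k)) \<longlonglongrightarrow> 0"
proof -
  obtain B where B: "\<forall>y\<in>range g. norm y \<le> B"
    using convergent_imp_bounded[OF assms(4)] by (auto simp: bounded_iff)
  obtain C where C: "\<forall>p. norm p \<le> B \<longrightarrow> \<bar>legendre H p\<bar> \<le> C"
    using leg_le_bound[OF assms(1,2)] by blast
  show ?thesis
  proof (rule Lim_null_comparison)
    show "\<forall>\<^sub>F k in sequentially. norm (f k * legendre H (g k)) \<le> \<bar>f k\<bar> * C"
      using B C by (auto simp: abs_mult intro!: mult_left_mono always_eventually)
    show "(\<lambda>k. \<bar>f k\<bar> * C) \<longlonglongrightarrow> 0"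
      using tendsto_mult_right[OF tendsto_rabs[OF assms(3)], of C] by simp
  qed
qed

lemma ev_bounded:
  fixes f :: "nat \<Rightarrow> 'a::real_normed_vector"
  assumes "\<forall>k\<ge>K. norm (f k) \<le> B"
  shows "bounded (range f)"
proof -
  have "range f \<subseteq> f ` {..<K} \<union> cball 0 B"
  proof
    fix y assume "y \<in> range f"
    then obtain k where k: "y = f k" by auto
    show "y \<in> f ` {..<K} \<union> cball 0 B"
    proof (cases "k < K")
      case True then show ?thesis using k by auto
    next
      case False then show ?thesis using k assms by auto
    qed
  qed
  moreover have "bounded (f ` {..<K} \<union> cball 0 B)" by auto
  ultimately show ?thesis using bounded_subset by blast
qed


theorem proposition3p3:
  fixes N :: nat
    and H :: "nat \<Rightarrow> 'a::euclidean_space \<Rightarrow> real"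
    and J :: "'a \<Rightarrow> ereal"
    and x :: 'a
    and t :: "nat \<Rightarrow> nat \<Rightarrow> real"
    and v :: "nat \<Rightarrow> nat \<Rightarrow> 'a"
    and v_inf :: "nat \<Rightarrow> 'a"
    and \<alpha> :: "nat \<Rightarrow> real"
    and xs :: "nat \<Rightarrow> 'a"
    and ubar :: "nat \<Rightarrow> nat \<Rightarrow> 'a"
  assumes N: "N \<ge> 1"
    and hH: "H1 N H"
    and hJ: "H2 J"
    and t_pos: "\<And>j k. j \<in> {1..N} \<Longrightarrow> t j k > 0"
    and t_lim: "\<And>j. j \<in> {1..N} \<Longrightarrow> (\<lambda>k. t j k) \<longlonglongrightarrow> 0"
    and v_lim: "\<And>j. j \<in> {1..N} \<Longrightarrow> (\<lambda>k. v j k) \<longlonglongrightarrow> v_inf j"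
    and ratio_lim: "\<And>j. j \<in> {1..N} \<Longrightarrow> (\<lambda>k. t j k / t 1 k) \<longlonglongrightarrow> \<alpha> j"
    and xs_def: "\<And>k. xs k = x + (\<Sum>j=1..N. t j k *\<^sub>R v j k)"
    and x_dom: "x \<in> edom J"
    and min: "\<And>k. lax_minimizer N H J (xs k) (\<lambda>j. t j k) (\<lambda>j. ubar j k)"
  shows "(\<forall>j\<in>{1..N}. (\<lambda>k. ubar j k) \<longlonglongrightarrow> 0)
       \<and> (\<forall>j\<in>{1..N}. subdiff J x \<noteq> {} \<and> \<alpha> j = 0 \<longrightarrow>
            (\<lambda>k. (1 / t 1 k) *\<^sub>R ubar j k) \<longlonglongrightarrow> 0)
       \<and> (\<forall>j\<in>{1..N}. subdiff J x \<noteq> {} \<and> \<alpha> j \<noteq> 0 \<longrightarrow>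
            bounded (range (\<lambda>k. (1 / t j k) *\<^sub>R ubar j k)))"
proof -
  have hc: "\<And>j. j \<in> {1..N} \<Longrightarrow> convex_on UNIV (H j) \<and> one_coercive (H j)"
    using hH by (auto simp: H1_def)
  have t1: "\<And>k. t 1 k > 0" using t_pos N by auto
  define S where "S k = (\<Sum>j=1..N. ubar j k)" for k
  define V where "V k = (\<Sum>j=1..N. t j k *\<^sub>R v j k)" for k
  define A where "A k = (\<Sum>j=1..N. t j k * legendre (H j) ((1 / t j k) *\<^sub>R ubar j k))" for k
  define B where "B k = (\<Sum>j=1..N. t j k * legendre (H j) (v j k))" for k
  obtain jx where jx: "J x = ereal jx"
    using x_dom hJ by (cases "J x") (auto simp: edom_def H2_def proper_fun_def)
  have key: "J (xs k - S k) + ereal (A k) \<le> ereal (jx + B k)" for k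
  proof -
    have "lax_obj N H J (xs k) (\<lambda>j. t j k) (\<lambda>j. ubar j k)
          \<le> lax_obj N H J (xs k) (\<lambda>j. t j k) (\<lambda>j. t j k *\<^sub>R v j k)"
      using min unfolding lax_minimizer_def by blast
    moreover have "(\<Sum>j=1..N. t j k * legendre (H j) ((1 / t j k) *\<^sub>R (t j k *\<^sub>R v j k))) = B k"
      unfolding B_def
    proof (rule sum.cong)
      fix j assume "j \<in> {1..N}"
      then have "t j k \<noteq> 0" using t_pos[of j k] by auto
      then show "t j k * legendre (H j) ((1 / t j k) *\<^sub>R (t j k *\<^sub>R v j k)) = t j k * legendre (H j) (v j k)"
        by simp
    qed simp
    moreover have "xs k - V k = x" using xs_def V_def by simp
    ultimately show ?thesis
      unfolding lax_obj_def S_def[symmetric] A_def[symmetric] V_def[symmetric] using jx by simp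
  qed
  have tv0: "(\<lambda>k. t j k *\<^sub>R v j k) \<longlonglongrightarrow> 0" if "j \<in> {1..N}" for j
    using tendsto_scaleR[OF t_lim[OF that] v_lim[OF that]] by simp
  have V0: "(\<lambda>k. norm (V k)) \<longlonglongrightarrow> 0"
    unfolding V_def by (rule tendsto_norm_zero) (rule tendsto_null_sum, rule tv0)
  have B0: "B \<longlonglongrightarrow> 0"
    unfolding B_def by (rule tendsto_null_sum) (use tL0 hc t_lim v_lim in blast)
  have p1: "\<forall>j\<in>{1..N}. (\<lambda>k. ubar j k) \<longlonglongrightarrow> 0"
  proof
    fix j0 assume j0: "j0 \<in> {1..N}"
    have "J x < \<infinity>" using x_dom by (simp add: edom_def)
    from J_lower[OF hJ this] obtain c Lc where Lc: "Lc \<ge> 0" and cL: "\<forall>y. J y \<ge> ereal (c - Lc * norm (y - x))"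
      by blast
    show "(\<lambda>k. ubar j0 k) \<longlonglongrightarrow> 0"
    proof (rule LIMSEQ_I)
      fix \<epsilon> :: real assume \<epsilon>: "\<epsilon> > 0"
      define K where "K = \<bar>jx - c\<bar> + 1"
      have K0: "K > 0" by (simp add: K_def)
      define R where "R = Lc + K / \<epsilon>"
      have R0: "R \<ge> 0" using Lc K0 \<epsilon> by (simp add: R_def)
      obtain M where M: "\<forall>j\<in>{1..N}. \<forall>p. legendre (H j) p \<ge> R * norm p - M j"
        using M_choice[of "{1..N}" H R, OF hc R0] by blast
      define E where "E k = B k + Lc * norm (V k) + (\<Sum>j=1..N. t j k * M j)" for k
      have E0: "E \<longlonglongrightarrow> 0"
      proof -
        have "(\<lambda>k. \<Sum>j=1..N. t j k * M j) \<longlonglongrightarrow> 0"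
          by (rule tendsto_null_sum) (use tendsto_mult_left_zero t_lim in blast)
        then show ?thesis unfolding E_def
          using tendsto_add[OF tendsto_add[OF B0 tendsto_mult_right_zero[OF V0, of Lc]]] by simp
      qed
      then have "eventually (\<lambda>k. E k < 1) sequentially" by (rule order_tendstoD) simp
      then obtain k0 where k0: "\<forall>k\<ge>k0. E k < 1" by (auto simp: eventually_sequentially)
      show "\<exists>no. \<forall>n\<ge>no. norm (ubar j0 n - 0) < \<epsilon>"
      proof (intro exI allI impI)
        fix k assume "k0 \<le> k"
        then have Ek: "E k < 1" using k0 by auto
        define U where "U = (\<Sum>j=1..N. norm (ubar j k))"
        have "ereal (c - Lc * norm (xs k - S k - x)) + ereal (A k) \<le> J (xs k - S k) + ereal (A k)"
          by (rule add_right_mono) (use cL in blast)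
        also have "\<dots> \<le> ereal (jx + B k)" by (rule key)
        finally have I1: "c - Lc * norm (xs k - S k - x) + A k \<le> jx + B k" by simp
        have "xs k - S k - x = V k - S k" using xs_def V_def by (simp add: algebra_simps)
        moreover have "norm (V k - S k) \<le> norm (V k) + U"
          using norm_triangle_ineq4[of "V k" "S k"] norm_sum[of "\<lambda>j. ubar j k" "{1..N}"]
          unfolding S_def U_def by linarith
        ultimately have I2: "norm (xs k - S k - x) \<le> norm (V k) + U" by (metis diff_right_commute)
        have "A k \<ge> (\<Sum>j=1..N. R * norm (ubar j k) - t j k * M j)"
          unfolding A_def
        proof (rule sum_mono)
          fix j assume j: "j \<in> {1..N}"
          have tj: "t j k > 0" using t_pos[OF j] .
          have "legendre (H j) ((1 / t j k) *\<^sub>R ubar j k) \<ge> R * norm ((1 / t j k) *\<^sub>R ubar j k) - M j"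
            using M j by blast
          then have "t j k * legendre (H j) ((1 / t j k) *\<^sub>R ubar j k)
                 \<ge> t j k * (R * norm ((1 / t j k) *\<^sub>R ubar j k) - M j)"
            using tj by (simp add: mult_left_mono)
          also have "t j k * (R * norm ((1 / t j k) *\<^sub>R ubar j k) - M j) = R * norm (ubar j k) - t j k * M j"
            using tj by (simp add: algebra_simps)
          finally show "R * norm (ubar j k) - t j k * M j \<le> t j k * legendre (H j) ((1 / t j k) *\<^sub>R ubar j k)" .
        qed
        also have "(\<Sum>j=1..N. R * norm (ubar j k) - t j k * M j) = R * U - (\<Sum>j=1..N. t j k * M j)"
          by (simp add: U_def sum_subtractf sum_distrib_left)
        finally have I3: "A k \<ge> R * U - (\<Sum>j=1..N. t j k * M j)" .
        have "c - Lc * (norm (V k) + U) + (R * U - (\<Sum>j=1..N. t j k * M j)) \<le> jx + B k"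
          using I1 I2 I3 Lc by (smt (verit) mult_left_mono)
        then have "(R - Lc) * U \<le> jx - c + E k" by (simp add: E_def algebra_simps)
        then have "(K / \<epsilon>) * U < K" using Ek by (simp add: R_def K_def)
        then have "U < \<epsilon>" using K0 \<epsilon> by (simp add: field_simps)
        moreover have "norm (ubar j0 k) \<le> U" unfolding U_def
          by (rule member_le_sum) (use j0 in auto)
        ultimately show "norm (ubar j0 k - 0) < \<epsilon>" by simp
      qed
    qed
  qed
  have vb: "\<exists>Bv. \<forall>k. norm (v j k) \<le> Bv" if "j \<in> {1..N}" for j
    using convergent_imp_bounded[OF v_lim[OF that]] by (auto simp: bounded_iff)
  have rb: "\<exists>r\<ge>0. \<forall>k. t j k / t 1 k \<le> r" if hj: "j \<in> {1..N}" for j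
  proof -
    obtain r where "\<forall>y\<in>range (\<lambda>k. t j k / t 1 k). norm y \<le> r"
      using convergent_imp_bounded[OF ratio_lim[OF hj]] by (auto simp: bounded_iff)
    then have "\<forall>k. t j k / t 1 k \<le> r" by (metis (no_types) abs_ge_self order_trans rangeI real_norm_def)
    moreover have "r \<ge> 0" using \<open>\<forall>y\<in>_. norm y \<le> r\<close> by (meson norm_ge_zero order_trans rangeI)
    ultimately show ?thesis by blast
  qed
  have core: "\<exists>C0\<ge>0. \<forall>i\<in>{1..N}. \<forall>k. t i k * (legendre (H i) ((1 / t i k) *\<^sub>R ubar i k)
        - s \<bullet> ((1 / t i k) *\<^sub>R ubar i k) + H i s) \<le> t 1 k * C0"
    if s: "s \<in> subdiff J x" for s
  proof -
    define D where "D i k = legendre (H i) ((1 / t i k) *\<^sub>R ubar i k) - s \<bullet> ((1 / t i k) *\<^sub>R ubar i k) + H i s" for i k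
    define E where "E i k = legendre (H i) (v i k) - s \<bullet> v i k + H i s" for i k
    have D0: "D i k \<ge> 0" if "i \<in> {1..N}" for i k
      using leg_ge[of "H i" "(1 / t i k) *\<^sub>R ubar i k" s] hc[OF that]
      by (simp add: D_def inner_commute)
    have "\<forall>i\<in>{1..N}. \<exists>C. C \<ge> 0 \<and> (\<forall>k. E i k \<le> C)"
    proof
      fix i assume i: "i \<in> {1..N}"
      obtain Bv where Bv: "\<forall>k. norm (v i k) \<le> Bv" using vb[OF i] by blast
      obtain C where C: "\<forall>p. norm p \<le> Bv \<longrightarrow> \<bar>legendre (H i) p\<bar> \<le> C"
        using leg_le_bound[of "H i" Bv] hc[OF i] by blast
      have "E i k \<le> C + norm s * Bv + \<bar>H i s\<bar>" for k
      proof -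
        have "\<bar>legendre (H i) (v i k)\<bar> \<le> C" using C Bv by blast
        moreover have "- (s \<bullet> v i k) \<le> norm s * Bv"
          using Cauchy_Schwarz_ineq2[of s "v i k"] Bv[rule_format, of k]
          by (smt (verit, best) mult_left_mono norm_ge_zero)
        ultimately show ?thesis by (simp add: E_def)
      qed
      moreover have "C + norm s * Bv + \<bar>H i s\<bar> \<ge> 0"
        using C Bv[rule_format, of 0] by (smt (verit) mult_nonneg_nonneg norm_ge_zero)
      ultimately show "\<exists>C. C \<ge> 0 \<and> (\<forall>k. E i k \<le> C)" by blast
    qed
    then obtain CE where CE: "\<forall>i\<in>{1..N}. CE i \<ge> 0 \<and> (\<forall>k. E i k \<le> CE i)"
      by (rule bchoice[THEN exE]) blast
    have "\<forall>i\<in>{1..N}. \<exists>r\<ge>0. \<forall>k. t i k / t 1 k \<le> r" using rb by blast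
    then obtain Rr where Rr: "\<forall>i\<in>{1..N}. Rr i \<ge> 0 \<and> (\<forall>k. t i k / t 1 k \<le> Rr i)"
      by (rule bchoice[THEN exE]) blast
    define C0 where "C0 = (\<Sum>i=1..N. Rr i * CE i)"
    have C00: "C0 \<ge> 0" unfolding C0_def by (rule sum_nonneg) (use CE Rr in auto)
    have main: "t i k * D i k \<le> t 1 k * C0" if i: "i \<in> {1..N}" for i k
    proof -
      have "J (xs k - S k) \<ge> J x + ereal (s \<bullet> (xs k - S k - x))"
        using s by (simp add: subdiff_def)
      then have "ereal (jx + s \<bullet> (xs k - S k - x)) + ereal (A k) \<le> J (xs k - S k) + ereal (A k)"
        using jx by (metis add_right_mono plus_ereal.simps(1))
      also have "\<dots> \<le> ereal (jx + B k)" by (rule key)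
      finally have "jx + s \<bullet> (xs k - S k - x) + A k \<le> jx + B k" by simp
      moreover have "xs k - S k - x = V k - S k" using xs_def V_def by (simp add: algebra_simps)
      ultimately have I: "A k - s \<bullet> S k \<le> B k - s \<bullet> V k" by (simp add: inner_diff_right)
      have eqD: "(\<Sum>j=1..N. t j k * D j k) = A k - s \<bullet> S k + (\<Sum>j=1..N. t j k * H j s)"
      proof -
        have "t j k * D j k = t j k * legendre (H j) ((1 / t j k) *\<^sub>R ubar j k) - s \<bullet> ubar j k + t j k * H j s"
          if "j \<in> {1..N}" for j
        proof -
          have "t j k \<noteq> 0" using t_pos[OF that, of k] by linarith
          then show ?thesis by (simp add: D_def algebra_simps)
        qed
        then have "(\<Sum>j=1..N. t j k * D j k) = (\<Sum>j=1..N. t j k * legendre (H j) ((1 / t j k) *\<^sub>R ubar j k) - s \<bullet> ubar j k + t j k * H j s)"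
          by (rule sum.cong[OF refl])
        also have "\<dots> = A k - s \<bullet> S k + (\<Sum>j=1..N. t j k * H j s)"
          by (simp add: A_def S_def sum.distrib sum_subtractf inner_sum_right)
        finally show ?thesis .
      qed
      have eqE: "(\<Sum>j=1..N. t j k * E j k) = B k - s \<bullet> V k + (\<Sum>j=1..N. t j k * H j s)"
        by (simp add: E_def B_def V_def algebra_simps sum.distrib sum_subtractf inner_sum_right sum_distrib_left)
      have "t i k * D i k \<le> (\<Sum>j=1..N. t j k * D j k)"
      proof (rule member_le_sum)
        fix j assume "j \<in> {1..N} - {i}"
        then have "j \<in> {1..N}" by blast
        then show "0 \<le> t j k * D j k" using D0 t_pos by (meson less_imp_le mult_nonneg_nonneg)
      qed (use i in auto)
      also have "\<dots> \<le> (\<Sum>j=1..N. t j k * E j k)" using eqD eqE I by linarith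
      also have "\<dots> \<le> (\<Sum>j=1..N. t 1 k * (Rr j * CE j))"
      proof (rule sum_mono)
        fix j assume j: "j \<in> {1..N}"
        have tj: "t j k > 0" using t_pos[OF j] .
        have "t j k * E j k \<le> t j k * CE j" using CE j tj by (simp add: mult_left_mono)
        also have "t j k \<le> t 1 k * Rr j"
        proof -
          have "t j k / t 1 k \<le> Rr j" using Rr j by blast
          then show ?thesis using t1[of k] by (simp add: pos_divide_le_eq mult.commute)
        qed
        then have "t j k * CE j \<le> t 1 k * Rr j * CE j" using CE j by (simp add: mult_right_mono)
        finally show "t j k * E j k \<le> t 1 k * (Rr j * CE j)" by (simp add: mult.assoc)
      qed
      also have "\<dots> = t 1 k * C0" by (simp add: C0_def sum_distrib_left)
      finally show ?thesis .
    qed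
    show ?thesis using C00 main unfolding D_def by blast
  qed
  have est: "(t i k / t 1 k) * ((R - norm s) * norm ((1 / t i k) *\<^sub>R ubar i k)) \<le> C0 + (t i k / t 1 k) * (M i - H i s)
           \<and> norm ((1 / t 1 k) *\<^sub>R ubar i k) = (t i k / t 1 k) * norm ((1 / t i k) *\<^sub>R ubar i k)"
    if i: "i \<in> {1..N}" and C0: "\<forall>i\<in>{1..N}. \<forall>k. t i k * (legendre (H i) ((1 / t i k) *\<^sub>R ubar i k)
        - s \<bullet> ((1 / t i k) *\<^sub>R ubar i k) + H i s) \<le> t 1 k * C0"
      and M: "\<forall>j\<in>{1..N}. \<forall>p. legendre (H j) p \<ge> R * norm p - M j"
    for i k s R C0 M
  proof -
    define w where "w = (1 / t i k) *\<^sub>R ubar i k"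
    define r where "r = t i k / t 1 k"
    have ti: "t i k > 0" using t_pos[OF i] .
    have r0: "r > 0" using ti t1[of k] by (simp add: r_def)
    have "t i k * (legendre (H i) w - s \<bullet> w + H i s) \<le> t 1 k * C0" using C0 i by (simp add: w_def)
    then have "r * (legendre (H i) w - s \<bullet> w + H i s) \<le> C0"
      using t1[of k] by (simp add: r_def pos_divide_le_eq mult.commute mult.left_commute)
    moreover have "legendre (H i) w - s \<bullet> w + H i s \<ge> (R - norm s) * norm w - M i + H i s"
    proof -
      have "legendre (H i) w \<ge> R * norm w - M i" using M i by blast
      moreover have "s \<bullet> w \<le> norm s * norm w" by (rule norm_cauchy_schwarz)
      ultimately show ?thesis by (simp add: algebra_simps)
    qed
    ultimately have "r * ((R - norm s) * norm w - M i + H i s) \<le> C0"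
      using r0 by (smt (verit) mult_left_mono)
    then have 1: "r * ((R - norm s) * norm w) \<le> C0 + r * (M i - H i s)" by (simp add: algebra_simps)
    have "norm ((1 / t 1 k) *\<^sub>R ubar i k) = norm (ubar i k) / t 1 k" using t1[of k] by simp
    also have "\<dots> = r * norm w" using ti t1[of k] by (simp add: r_def w_def)
    finally show ?thesis using 1 by (simp add: r_def w_def)
  qed
  have p2: "\<forall>j\<in>{1..N}. subdiff J x \<noteq> {} \<and> \<alpha> j = 0 \<longrightarrow>
            (\<lambda>k. (1 / t 1 k) *\<^sub>R ubar j k) \<longlonglongrightarrow> 0"
  proof (intro ballI impI)
    fix i assume i: "i \<in> {1..N}" and h: "subdiff J x \<noteq> {} \<and> \<alpha> i = 0"
    then obtain s where s: "s \<in> subdiff J x" by blast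
    obtain C0 where C00: "C0 \<ge> 0" and C0: "\<forall>i\<in>{1..N}. \<forall>k. t i k * (legendre (H i) ((1 / t i k) *\<^sub>R ubar i k)
        - s \<bullet> ((1 / t i k) *\<^sub>R ubar i k) + H i s) \<le> t 1 k * C0" using core[OF s] by blast
    show "(\<lambda>k. (1 / t 1 k) *\<^sub>R ubar i k) \<longlonglongrightarrow> 0"
    proof (rule LIMSEQ_I)
      fix \<epsilon> :: real assume \<epsilon>: "\<epsilon> > 0"
      define R where "R = norm s + 2 * (C0 + 1) / \<epsilon>"
      have R0: "R \<ge> 0" using C00 \<epsilon> by (simp add: R_def)
      obtain M where M: "\<forall>j\<in>{1..N}. \<forall>p. legendre (H j) p \<ge> R * norm p - M j"
        using M_choice[of "{1..N}" H R, OF hc R0] by blast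
      have "(\<lambda>k. (t i k / t 1 k) * \<bar>M i - H i s\<bar>) \<longlonglongrightarrow> 0"
      proof -
        have "(\<lambda>k. t i k / t 1 k) \<longlonglongrightarrow> 0" using ratio_lim[OF i] h by simp
        then show ?thesis by (rule tendsto_mult_left_zero)
      qed
      then have "eventually (\<lambda>k. (t i k / t 1 k) * \<bar>M i - H i s\<bar> < 1) sequentially"
        by (rule order_tendstoD) simp
      then obtain k0 where k0: "\<forall>k\<ge>k0. (t i k / t 1 k) * \<bar>M i - H i s\<bar> < 1"
        by (auto simp: eventually_sequentially)
      show "\<exists>no. \<forall>n\<ge>no. norm ((1 / t 1 n) *\<^sub>R ubar i n - 0) < \<epsilon>"
      proof (intro exI allI impI)
        fix k assume "k0 \<le> k"
        then have lt: "(t i k / t 1 k) * \<bar>M i - H i s\<bar> < 1" using k0 by auto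
        define r where "r = t i k / t 1 k"
        define W where "W = norm ((1 / t i k) *\<^sub>R ubar i k)"
        have e: "r * ((R - norm s) * W) \<le> C0 + r * (M i - H i s)"
          and n: "norm ((1 / t 1 k) *\<^sub>R ubar i k) = r * W"
          using est[OF i C0 M, of k] by (simp_all add: r_def W_def)
        have r0: "r \<ge> 0" using t_pos[OF i, of k] t1[of k] by (simp add: r_def)
        have "r * (M i - H i s) \<le> r * \<bar>M i - H i s\<bar>" using r0 by (simp add: mult_left_mono)
        then have "(R - norm s) * (r * W) < C0 + 1" using e lt by (simp add: r_def algebra_simps)
        then have "(2 * (C0 + 1) / \<epsilon>) * (r * W) < C0 + 1" by (simp add: R_def)
        then have "(C0 + 1) * (2 * (r * W)) < (C0 + 1) * \<epsilon>" using \<epsilon> by (simp add: field_simps)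
        moreover have "C0 + 1 > 0" using C00 by simp
        ultimately have "2 * (r * W) < \<epsilon>" by (simp add: mult_less_cancel_left_pos)
        then have "r * W < \<epsilon> / 2" by simp
        then show "norm ((1 / t 1 k) *\<^sub>R ubar i k - 0) < \<epsilon>" using n \<epsilon> by simp
      qed
    qed
  qed
  have p3: "\<forall>j\<in>{1..N}. subdiff J x \<noteq> {} \<and> \<alpha> j \<noteq> 0 \<longrightarrow>
            bounded (range (\<lambda>k. (1 / t j k) *\<^sub>R ubar j k))"
  proof (intro ballI impI)
    fix i assume i: "i \<in> {1..N}" and h: "subdiff J x \<noteq> {} \<and> \<alpha> i \<noteq> 0"
    then obtain s where s: "s \<in> subdiff J x" by blast
    obtain C0 where C00: "C0 \<ge> 0" and C0: "\<forall>i\<in>{1..N}. \<forall>k. t i k * (legendre (H i) ((1 / t i k) *\<^sub>R ubar i k)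
        - s \<bullet> ((1 / t i k) *\<^sub>R ubar i k) + H i s) \<le> t 1 k * C0" using core[OF s] by blast
    define R where "R = norm s + 1"
    have R0: "R \<ge> 0" by (simp add: R_def)
    obtain M where M: "\<forall>j\<in>{1..N}. \<forall>p. legendre (H j) p \<ge> R * norm p - M j"
      using M_choice[of "{1..N}" H R, OF hc R0] by blast
    have a0: "\<alpha> i \<ge> 0"
    proof (rule LIMSEQ_le_const[OF ratio_lim[OF i]])
      have "\<forall>n\<ge>0. 0 \<le> t i n / t 1 n" using t_pos[OF i] t1 by (simp add: less_imp_le)
      then show "\<exists>N. \<forall>n\<ge>N. 0 \<le> t i n / t 1 n" by blast
    qed
    then have ap: "\<alpha> i > 0" using h by simp
    have "eventually (\<lambda>k. t i k / t 1 k > \<alpha> i / 2) sequentially"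
      by (rule order_tendstoD(1)[OF ratio_lim[OF i]]) (use ap in simp)
    moreover have "eventually (\<lambda>k. t i k / t 1 k < \<alpha> i + 1) sequentially"
      by (rule order_tendstoD(2)[OF ratio_lim[OF i]]) simp
    ultimately have "eventually (\<lambda>k. \<alpha> i / 2 < t i k / t 1 k \<and> t i k / t 1 k < \<alpha> i + 1) sequentially"
      by (rule eventually_conj)
    then obtain k0 where k0: "\<forall>k\<ge>k0. \<alpha> i / 2 < t i k / t 1 k \<and> t i k / t 1 k < \<alpha> i + 1"
      by (auto simp: eventually_sequentially)
    show "bounded (range (\<lambda>k. (1 / t i k) *\<^sub>R ubar i k))"
    proof (rule ev_bounded[of k0 _ "2 * (C0 + (\<alpha> i + 1) * \<bar>M i - H i s\<bar>) / \<alpha> i"], intro allI impI)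
      fix k assume "k0 \<le> k"
      then have rr: "\<alpha> i / 2 < t i k / t 1 k" "t i k / t 1 k < \<alpha> i + 1" using k0 by auto
      define r where "r = t i k / t 1 k"
      define W where "W = norm ((1 / t i k) *\<^sub>R ubar i k)"
      have e: "r * ((R - norm s) * W) \<le> C0 + r * (M i - H i s)"
        using est[OF i C0 M, of k] by (simp_all add: r_def W_def)
      have r0: "r \<ge> 0" using rr(1) ap unfolding r_def by linarith
      have "r * (M i - H i s) \<le> r * \<bar>M i - H i s\<bar>" using r0 by (simp add: mult_left_mono)
      also have "\<dots> \<le> (\<alpha> i + 1) * \<bar>M i - H i s\<bar>" using rr(2) unfolding r_def by (intro mult_right_mono) auto
      finally have "r * W \<le> C0 + (\<alpha> i + 1) * \<bar>M i - H i s\<bar>" using e by (simp add: R_def)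
      moreover have "(\<alpha> i / 2) * W \<le> r * W" using rr(1) unfolding r_def W_def by (intro mult_right_mono) auto
      ultimately have "(\<alpha> i / 2) * W \<le> C0 + (\<alpha> i + 1) * \<bar>M i - H i s\<bar>" by linarith
      then show "norm ((1 / t i k) *\<^sub>R ubar i k) \<le> 2 * (C0 + (\<alpha> i + 1) * \<bar>M i - H i s\<bar>) / \<alpha> i"
        using ap by (simp add: W_def field_simps)
    qed
  qed
  show ?thesis using p1 p2 p3 by blast
qed

end
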